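(* Let $G$ be a factor graph, $f_i$ an unknown factor of $G$, $C_{f_i}$ the set of known factors of $G$ that are possibly identical to $f_i$, and $C^{\ell}_{f_i}$ a maximal subset of $C_{f_i}$ such that $f_j\approx f_k$ for all $f_j,f_k\in C^{\ell}_{f_i}$. If $|C^{\ell}_{f_i}|/|C_{f_i}|>0.5$, then $C^{\ell}_{f_i}$ is unique, i.e. there is no other maximal subset $C^{\ell'}_{f_i}\ne C^{\ell}_{f_i}$ of $C_{f_i}$ with $|C^{\ell'}_{f_i}|=|C^{\ell}_{f_i}|$ whose elements are pairwise possibly identical.
   Context: A factor graph (FG) is an undirected bipartite graph with random variables (each with a finite range) and factors; each factor $f_j$ defines a function $\phi_j(\mathcal R_j)$ mapping assignments of a sequence $\mathcal R_j$ of random variables to positive reals (potentials), and a random variable is adjacent to $f_j$ iff it occurs in $\mathcal R_j$. A factor is \emph{unknown} if its potential values are unknown, otherwise known. Evidence is a set of observed events. $\mathrm{Ne}_G(v)$ is the neighbour set of node $v$. For factors $f_i,f_j$, their 2-step neighbourhoods are \emph{indistinguishable} if $|\mathrm{Ne}_G(f_i)|=|\mathrm{Ne}_G(f_j)|$ and there is a bijection $\tau:\mathrm{Ne}_G(f_i)\to\mathrm{Ne}_G(f_j)$ such that each $R_k$ and $\tau(R_k)$ have identical observed evidence, identical ranges, and the same number of neighbouring factors. Factors $f_i,f_j$ are \emph{possibly identical}, written $f_i\approx f_j$, if their 2-step neighbourhoods are indistinguishable and at least one of them is unknown or both encode identical potential mappings. Here "maximal subset" refers to a subset of largest cardinality among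 subsets of $C_{f_i}$ with pairwise possibly identical elements. *)

theory Defs
  imports Complex_Main
begin

text \<open>A factor is known iff its potential is Some phi, where phi maps assignments
(lists of values, one per argument variable, in order) to positive reals;
unknown factors have potential None.\<close>

record ('v, 'f, 'd) factor_graph =
  rvars   :: "'v set"
  factors :: "'f set"
  scope   :: "'f \<Rightarrow> 'v list"
  rng     :: "'v \<Rightarrow> 'd set"
  pot     :: "'f \<Rightarrow> ('d list \<Rightarrow> real) option"

definition assignments :: "('v, 'f, 'd) factor_graph \<Rightarrow> 'f \<Rightarrow> 'd list set" where
  "assignments G f = listset (map (rng G) (scope G f))"

definition wf_fg :: "('v, 'f, 'd) factor_graph \<Rightarrow> bool" where
  "wf_fg G \<longleftrightarrow>
     finite (rvars G) \<and> finite (factors G) \<and>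
     (\<forall>v\<in>rvars G. finite (rng G v) \<and> rng G v \<noteq> {}) \<and>
     (\<forall>f\<in>factors G. distinct (scope G f) \<and> set (scope G f) \<subseteq> rvars G) \<and>
     (\<forall>f\<in>factors G. \<forall>phi. pot G f = Some phi \<longrightarrow> (\<forall>xs\<in>assignments G f. phi xs > 0))"

definition known :: "('v, 'f, 'd) factor_graph \<Rightarrow> 'f \<Rightarrow> bool" where
  "known G f \<longleftrightarrow> pot G f \<noteq> None"

definition Ne_factor :: "('v, 'f, 'd) factor_graph \<Rightarrow> 'f \<Rightarrow> 'v set" where
  "Ne_factor G f = set (scope G f)"

definition Ne_var :: "('v, 'f, 'd) factor_graph \<Rightarrow> 'v \<Rightarrow> 'f set" where
  "Ne_var G v = {f \<in> factors G. v \<in> set (scope G f)}"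

text \<open>Evidence is a set of observed events (variable = value).\<close>
definition obs :: "('v \<times> 'd) set \<Rightarrow> 'v \<Rightarrow> 'd set" where
  "obs E v = {x. (v, x) \<in> E}"

definition indisting_2step ::
  "('v, 'f, 'd) factor_graph \<Rightarrow> ('v \<times> 'd) set \<Rightarrow> 'f \<Rightarrow> 'f \<Rightarrow> bool" where
  "indisting_2step G E fi fj \<longleftrightarrow>
     card (Ne_factor G fi) = card (Ne_factor G fj) \<and>
     (\<exists>\<tau>. bij_betw \<tau> (Ne_factor G fi) (Ne_factor G fj) \<and>
          (\<forall>R\<in>Ne_factor G fi. obs E R = obs E (\<tau> R) \<and> rng G R = rng G (\<tau> R) \<and>
                card (Ne_var G R) = card (Ne_var G (\<tau> R))))"

definition identical_potentials :: "('v, 'f, 'd) factor_graph \<Rightarrow> 'f \<Rightarrow> 'f \<Rightarrow> bool" where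
  "identical_potentials G fi fj \<longleftrightarrow>
     (\<exists>phi psi. pot G fi = Some phi \<and> pot G fj = Some psi \<and>
        assignments G fi = assignments G fj \<and>
        (\<forall>xs\<in>assignments G fi. phi xs = psi xs))"

definition poss_ident ::
  "('v, 'f, 'd) factor_graph \<Rightarrow> ('v \<times> 'd) set \<Rightarrow> 'f \<Rightarrow> 'f \<Rightarrow> bool" where
  "poss_ident G E fi fj \<longleftrightarrow>
     indisting_2step G E fi fj \<and>
     (\<not> known G fi \<or> \<not> known G fj \<or> identical_potentials G fi fj)"

definition cand :: "('v, 'f, 'd) factor_graph \<Rightarrow> ('v \<times> 'd) set \<Rightarrow> 'f \<Rightarrow> 'f set" where
  "cand G E fi = {fj \<in> factors G. known G fj \<and> poss_ident G E fi fj}"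

definition pairwise_pi ::
  "('v, 'f, 'd) factor_graph \<Rightarrow> ('v \<times> 'd) set \<Rightarrow> 'f set \<Rightarrow> bool" where
  "pairwise_pi G E S \<longleftrightarrow> (\<forall>fj\<in>S. \<forall>fk\<in>S. poss_ident G E fj fk)"

definition maximal_pi_subset ::
  "('v, 'f, 'd) factor_graph \<Rightarrow> ('v \<times> 'd) set \<Rightarrow> 'f \<Rightarrow> 'f set \<Rightarrow> bool" where
  "maximal_pi_subset G E fi S \<longleftrightarrow>
     S \<subseteq> cand G E fi \<and> pairwise_pi G E S \<and>
     (\<forall>T. T \<subseteq> cand G E fi \<and> pairwise_pi G E T \<longrightarrow> card T \<le> card S)"

end

theory Submission
  imports Defs
begin

lemma indisting_trans:
  assumes "indisting_2step G E a b" "indisting_2step G E b c"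
  shows "indisting_2step G E a c"
proof -
  from assms(1) obtain t1 where t1: "bij_betw t1 (Ne_factor G a) (Ne_factor G b)"
    "\<forall>R\<in>Ne_factor G a. obs E R = obs E (t1 R) \<and> rng G R = rng G (t1 R) \<and>
                card (Ne_var G R) = card (Ne_var G (t1 R))"
    unfolding indisting_2step_def by blast
  from assms(2) obtain t2 where t2: "bij_betw t2 (Ne_factor G b) (Ne_factor G c)"
    "\<forall>R\<in>Ne_factor G b. obs E R = obs E (t2 R) \<and> rng G R = rng G (t2 R) \<and>
                card (Ne_var G R) = card (Ne_var G (t2 R))"
    unfolding indisting_2step_def by blast
  have "bij_betw (t2 \<circ> t1) (Ne_factor G a) (Ne_factor G c)"
    using t1(1) t2(1) by (rule bij_betw_trans)
  moreover have "\<forall>R\<in>Ne_factor G a. obs E R = obs E ((t2 \<circ> t1) R) \<and> rng G R = rng G ((t2 \<circ> t1) R) \<and>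
                card (Ne_var G R) = card (Ne_var G ((t2 \<circ> t1) R))"
  proof
    fix R assume R: "R \<in> Ne_factor G a"
    then have "t1 R \<in> Ne_factor G b" using t1(1) bij_betw_apply by fast
    then show "obs E R = obs E ((t2 \<circ> t1) R) \<and> rng G R = rng G ((t2 \<circ> t1) R) \<and>
                card (Ne_var G R) = card (Ne_var G ((t2 \<circ> t1) R))"
      using R t1(2) t2(2) by auto
  qed
  moreover have "card (Ne_factor G a) = card (Ne_factor G c)"
    using assms unfolding indisting_2step_def by simp
  ultimately show ?thesis unfolding indisting_2step_def by (intro conjI exI[of _ "t2 \<circ> t1"])
qed

lemma ip_trans:
  assumes "identical_potentials G a b" "identical_potentials G b c"
  shows "identical_potentials G a c"
proof -
  obtain p q where 1: "pot G a = Some p" "pot G b = Some q" "assignments G a = assignments G b"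
    "\<forall>xs\<in>assignments G a. p xs = q xs"
    using assms(1) unfolding identical_potentials_def by blast
  obtain q' r where 2: "pot G b = Some q'" "pot G c = Some r" "assignments G b = assignments G c"
    "\<forall>xs\<in>assignments G b. q' xs = r xs"
    using assms(2) unfolding identical_potentials_def by blast
  have "q' = q" using 1(2) 2(1) by simp
  then have "\<forall>xs\<in>assignments G a. p xs = r xs" using 1 2 by simp
  then show ?thesis unfolding identical_potentials_def using 1 2 by blast
qed

lemma pi_trans:
  assumes "poss_ident G E a b" "poss_ident G E b c" "known G a" "known G b" "known G c"
  shows "poss_ident G E a c"
proof -
  have i1: "indisting_2step G E a b" and i2: "indisting_2step G E b c"
    and p1: "identical_potentials G a b" and p2: "identical_potentials G b c"
    using assms unfolding poss_ident_def by simp_all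
  have "indisting_2step G E a c" using i1 i2 by (rule indisting_trans)
  moreover have "identical_potentials G a c" using p1 p2 by (rule ip_trans)
  ultimately show ?thesis unfolding poss_ident_def by simp
qed

theorem mainTheorem2:
  fixes G :: "('v, 'f, 'd) factor_graph" and E :: "('v \<times> 'd) set" and fi :: 'f
    and Cl :: "'f set"
  assumes "wf_fg G"
    and "fi \<in> factors G"
    and "\<not> known G fi"
    and "maximal_pi_subset G E fi Cl"
    and "real (card Cl) / real (card (cand G E fi)) > 0.5"
  shows "\<not> (\<exists>Cl'. Cl' \<subseteq> cand G E fi \<and> pairwise_pi G E Cl' \<and>
                 card Cl' = card Cl \<and> Cl' \<noteq> Cl)"
proof
  assume "\<exists>Cl'. Cl' \<subseteq> cand G E fi \<and> pairwise_pi G E Cl' \<and> card Cl' = card Cl \<and> Cl' \<noteq> Cl"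
  then obtain D where D: "D \<subseteq> cand G E fi" "pairwise_pi G E D" "card D = card Cl" "D \<noteq> Cl"
    by blast
  let ?C = "cand G E fi"
  have finC: "finite ?C" using assms(1) unfolding wf_fg_def cand_def by auto
  have Cl: "Cl \<subseteq> ?C" "pairwise_pi G E Cl"
    "\<And>T. T \<subseteq> ?C \<Longrightarrow> pairwise_pi G E T \<Longrightarrow> card T \<le> card Cl"
    using assms(4) unfolding maximal_pi_subset_def by auto
  have finCl: "finite Cl" "finite D" using Cl(1) D(1) finC finite_subset by auto
  have cpos: "card ?C > 0"
  proof (rule ccontr)
    assume "\<not> card ?C > 0" then have "card ?C = 0" by simp
    then show False using assms(5) by simp
  qed
  have "2 * real (card Cl) > real (card ?C)"
    using assms(5) cpos by (simp add: field_simps)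
  moreover have "card (Cl \<union> D) \<le> card ?C"
    using Cl(1) D(1) finC by (intro card_mono) auto
  moreover have "card (Cl \<union> D) + card (Cl \<inter> D) = card Cl + card D"
    using finCl card_Un_Int by metis
  ultimately have "card (Cl \<inter> D) > 0" using D(3) by linarith
  then obtain g where g: "g \<in> Cl" "g \<in> D" by (metis card.empty ex_in_conv IntE less_irrefl)
  have kn: "\<And>x. x \<in> ?C \<Longrightarrow> known G x" unfolding cand_def by auto
  have pu: "pairwise_pi G E (Cl \<union> D)"
    unfolding pairwise_pi_def
  proof (intro ballI)
    fix a b assume a: "a \<in> Cl \<union> D" and b: "b \<in> Cl \<union> D"
    have ag: "poss_ident G E a g" "poss_ident G E g a"
      using a g Cl(2) D(2) unfolding pairwise_pi_def by auto
    have gb: "poss_ident G E g b"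
      using b g Cl(2) D(2) unfolding pairwise_pi_def by auto
    have "known G a" "known G b" "known G g" using a b g Cl(1) D(1) kn by auto
    then show "poss_ident G E a b" using pi_trans ag(1) gb by metis
  qed
  have "card (Cl \<union> D) \<le> card Cl" using Cl(3)[OF _ pu] Cl(1) D(1) by auto
  moreover have "Cl \<subset> Cl \<union> D"
  proof -
    have "\<not> D \<subseteq> Cl"
    proof
      assume "D \<subseteq> Cl" then have "D = Cl" using card_subset_eq finCl D(3) by metis
      then show False using D(4) by simp
    qed
    then show ?thesis by auto
  qed
  then have "card Cl < card (Cl \<union> D)" using finCl by (intro psubset_card_mono) auto
  ultimately show False by simp
qed

end
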